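(* Consider the TVFJ dynamics described in the context, and suppose the system is asymptotically stable. Let $\mathbf x_0\in[0,1]^n$ and let $\omega(\mathbf x_0)$ be the $\omega$-limit set of the trajectory with $\mathbf x[0]=\mathbf x_0$. Then for every $\mathbf x^*\in\omega(\mathbf x_0)$ and every $i$, \[ \min_j s_j\le x_i^*\le\max_j s_j . \]
   Context: There are $n$ agents with opinions $\mathbf x[t]$ and innate opinions $\mathbf s\in[0,1]^n$, evolving by $\mathbf x[t+1]=\Lambda[t]W[t]\mathbf x[t]+(I-\Lambda[t])\mathbf s$, with $W[t]$ row-stochastic and $\Lambda[t]=\mathrm{diag}(\lambda_1[t],\dots,\lambda_n[t])$, $\lambda_i[t]\in[0,1]$. Standing assumptions: $\lambda_i[t]=0$ iff $w_{ij}[t]=0$ for all $j$; there is no $\tau$ with $\Lambda[\tau]=0$. The state transition matrix is $\Phi(t,\tau)=\Lambda[t-1]W[t-1]\cdots\Lambda[\tau]W[\tau]$ for $t>\tau$, $\Phi(\tau,\tau)=I$. The system is asymptotically stable if $\lim_{t\to\infty}\|\Phi(t,\tau)\|=0$ for all $\tau\ge0$, where $\|A\|:=\max_i\sum_j|a_{ij}|$. The $\omega$-limit set is $\omega(\mathbf x_0)=\{\mathbf y:\exists\,t_k\to\infty,\ \mathbf x[t_k]\to\mathbf y\}$. *)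

theory Defs
  imports "HOL-Analysis.Analysis"
begin

text \<open>Agents are indexed by a finite type 'n. W t is the matrix W[t],
  lam t is the diagonal of Lambda[t].\<close>

definition row_stochastic :: "real^'n^'n \<Rightarrow> bool" where
  "row_stochastic A \<longleftrightarrow> (\<forall>i j. A $ i $ j \<ge> 0) \<and> (\<forall>i. (\<Sum>j\<in>UNIV. A $ i $ j) = 1)"

definition diagm :: "real^'n \<Rightarrow> real^'n^'n" where
  "diagm l = (\<chi> i j. if i = j then l $ i else 0)"

definition mat_inf_norm :: "real^'n^'n \<Rightarrow> real" where
  "mat_inf_norm A = Max (range (\<lambda>i. \<Sum>j\<in>UNIV. \<bar>A $ i $ j\<bar>))"

definition tvfj_admissible :: "(nat \<Rightarrow> real^'n^'n) \<Rightarrow> (nat \<Rightarrow> real^'n) \<Rightarrow> bool" where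
  "tvfj_admissible W lam \<longleftrightarrow>
     (\<forall>t. row_stochastic (W t)) \<and>
     (\<forall>t i. 0 \<le> lam t $ i \<and> lam t $ i \<le> 1) \<and>
     (\<forall>t i. lam t $ i = 0 \<longleftrightarrow> (\<forall>j. W t $ i $ j = 0)) \<and>
     (\<forall>t. diagm (lam t) \<noteq> 0)"

fun Phi_from :: "(nat \<Rightarrow> real^'n^'n) \<Rightarrow> (nat \<Rightarrow> real^'n) \<Rightarrow> nat \<Rightarrow> nat \<Rightarrow> real^'n^'n" where
  "Phi_from W lam tau 0 = mat 1"
| "Phi_from W lam tau (Suc k) = (diagm (lam (tau + k)) ** W (tau + k)) ** Phi_from W lam tau k"

definition Phi :: "(nat \<Rightarrow> real^'n^'n) \<Rightarrow> (nat \<Rightarrow> real^'n) \<Rightarrow> nat \<Rightarrow> nat \<Rightarrow> real^'n^'n" where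
  "Phi W lam t tau = Phi_from W lam tau (t - tau)"

definition asymp_stable :: "(nat \<Rightarrow> real^'n^'n) \<Rightarrow> (nat \<Rightarrow> real^'n) \<Rightarrow> bool" where
  "asymp_stable W lam \<longleftrightarrow> (\<forall>tau. ((\<lambda>t. mat_inf_norm (Phi W lam t tau)) \<longlongrightarrow> 0) sequentially)"

fun traj :: "(nat \<Rightarrow> real^'n^'n) \<Rightarrow> (nat \<Rightarrow> real^'n) \<Rightarrow> real^'n \<Rightarrow> real^'n \<Rightarrow> nat \<Rightarrow> real^'n" where
  "traj W lam s x0 0 = x0"
| "traj W lam s x0 (Suc t) =
     (diagm (lam t) ** W t) *v traj W lam s x0 t + (mat 1 - diagm (lam t)) *v s"

definition omega_limit :: "(nat \<Rightarrow> 'a::topological_space) \<Rightarrow> 'a set" where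
  "omega_limit x = {y. \<exists>r. strict_mono r \<and> (x \<circ> r) \<longlonglongrightarrow> y}"

end

theory Submission
  imports Defs
begin

lemma diagm_mult: "(diagm l ** W) $ i $ j = l$i * W$i$j"
  unfolding matrix_matrix_mult_def diagm_def
  by (simp add: if_distrib[of "\<lambda>x. x * y" for y] sum.delta cong: if_cong)

lemma if_sub0: "(if P then a else 0) - (if P then b else 0) = (if P then a - b else (0::real))" by simp

lemma diagm_vec: "((mat 1 - diagm l) *v s) $ i = (1 - l$i) * s$i"
  unfolding matrix_vector_mult_def diagm_def mat_def
  by (simp add: if_sub0 if_distrib[of "\<lambda>x. x * y" for y] sum.delta cong: if_cong)

definition rs :: "real^'n^'n \<Rightarrow> 'n \<Rightarrow> real" where
  "rs A i = (\<Sum>k\<in>UNIV. A $ i $ k)"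

lemma rs_step:
  "rs ((diagm l ** W) ** P) i = (\<Sum>j\<in>UNIV. l $ i * W $ i $ j * rs P j)"
proof -
  have "rs ((diagm l ** W) ** P) i = (\<Sum>k\<in>UNIV. \<Sum>j\<in>UNIV. l $ i * W $ i $ j * P $ j $ k)"
    unfolding rs_def by (simp add: matrix_matrix_mult_def[of "diagm l ** W"] diagm_mult mult.assoc sum_distrib_left)
  also have "\<dots> = (\<Sum>j\<in>UNIV. l $ i * W $ i $ j * rs P j)"
    unfolding rs_def by (subst sum.swap) (simp add: sum_distrib_left)
  finally show ?thesis .
qed

lemma traj_comp:
  "traj W lam s x0 (Suc t) $ i =
     (\<Sum>j\<in>UNIV. lam t $ i * W t $ i $ j * traj W lam s x0 t $ j) + (1 - lam t $ i) * s $ i"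
  by (simp add: diagm_vec matrix_vector_mult_def[of "diagm (lam t) ** W t"] diagm_mult)

lemma rs_le_norm: "rs A i \<le> mat_inf_norm A"
proof -
  have "rs A i \<le> (\<Sum>j\<in>UNIV. \<bar>A $ i $ j\<bar>)" unfolding rs_def by (rule sum_mono) simp
  also have "\<dots> \<le> mat_inf_norm A" unfolding mat_inf_norm_def by (rule Max_ge) auto
  finally show ?thesis .
qed

lemma upper:
  assumes adm: "tvfj_admissible W lam"
    and sM: "\<forall>j. s $ j \<le> M"
    and x0: "\<forall>i. x0 $ i - M \<le> 1"
  shows "traj W lam s x0 t $ i - M \<le> rs (Phi_from W lam 0 t) i"
  using x0
proof (induction t arbitrary: i)
  case 0
  then show ?case by (simp add: rs_def mat_def sum.delta)
next
  case (Suc t)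
  have W: "\<And>j. W t $ i $ j \<ge> 0" "(\<Sum>j\<in>UNIV. W t $ i $ j) = 1"
    using adm unfolding tvfj_admissible_def row_stochastic_def by auto
  have l: "0 \<le> lam t $ i" "lam t $ i \<le> 1" using adm unfolding tvfj_admissible_def by auto
  have "traj W lam s x0 (Suc t) $ i - M =
      (\<Sum>j\<in>UNIV. lam t $ i * W t $ i $ j * (traj W lam s x0 t $ j - M)) + (1 - lam t $ i) * (s $ i - M)"
    unfolding traj_comp
    by (simp add: algebra_simps sum.distrib sum_subtractf sum_distrib_left[symmetric] W(2))
  also have "\<dots> \<le> (\<Sum>j\<in>UNIV. lam t $ i * W t $ i $ j * rs (Phi_from W lam 0 t) j)"
  proof -
    have "(1 - lam t $ i) * (s $ i - M) \<le> 0" using l sM by (simp add: mult_nonneg_nonpos)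
    moreover have "(\<Sum>j\<in>UNIV. lam t $ i * W t $ i $ j * (traj W lam s x0 t $ j - M))
        \<le> (\<Sum>j\<in>UNIV. lam t $ i * W t $ i $ j * rs (Phi_from W lam 0 t) j)"
      by (rule sum_mono, rule mult_left_mono) (use Suc l W in auto)
    ultimately show ?thesis by linarith
  qed
  also have "\<dots> = rs (Phi_from W lam 0 (Suc t)) i" by (simp add: rs_step)
  finally show ?case .
qed

lemma lower:
  assumes adm: "tvfj_admissible W lam"
    and sM: "\<forall>j. m \<le> s $ j"
    and x0: "\<forall>i. m - x0 $ i \<le> 1"
  shows "m - traj W lam s x0 t $ i \<le> rs (Phi_from W lam 0 t) i"
  using x0
proof (induction t arbitrary: i)
  case 0
  then show ?case by (simp add: rs_def mat_def sum.delta)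
next
  case (Suc t)
  have W: "\<And>j. W t $ i $ j \<ge> 0" "(\<Sum>j\<in>UNIV. W t $ i $ j) = 1"
    using adm unfolding tvfj_admissible_def row_stochastic_def by auto
  have l: "0 \<le> lam t $ i" "lam t $ i \<le> 1" using adm unfolding tvfj_admissible_def by auto
  have "m - traj W lam s x0 (Suc t) $ i =
      (\<Sum>j\<in>UNIV. lam t $ i * W t $ i $ j * (m - traj W lam s x0 t $ j)) + (1 - lam t $ i) * (m - s $ i)"
    unfolding traj_comp
    by (simp add: algebra_simps sum.distrib sum_subtractf sum_distrib_left[symmetric] W(2))
  also have "\<dots> \<le> (\<Sum>j\<in>UNIV. lam t $ i * W t $ i $ j * rs (Phi_from W lam 0 t) j)"
  proof -
    have "(1 - lam t $ i) * (m - s $ i) \<le> 0" using l sM by (simp add: mult_nonneg_nonpos)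
    moreover have "(\<Sum>j\<in>UNIV. lam t $ i * W t $ i $ j * (m - traj W lam s x0 t $ j))
        \<le> (\<Sum>j\<in>UNIV. lam t $ i * W t $ i $ j * rs (Phi_from W lam 0 t) j)"
      by (rule sum_mono, rule mult_left_mono) (use Suc l W in auto)
    ultimately show ?thesis by linarith
  qed
  also have "\<dots> = rs (Phi_from W lam 0 (Suc t)) i" by (simp add: rs_step)
  finally show ?case .
qed

theorem corollary2:
  fixes W :: "nat \<Rightarrow> real^'n^'n" and lam :: "nat \<Rightarrow> real^'n"
    and s x0 xstar :: "real^'n"
  assumes "tvfj_admissible W lam"
    and "\<forall>i. 0 \<le> s $ i \<and> s $ i \<le> 1"
    and "asymp_stable W lam"
    and "\<forall>i. 0 \<le> x0 $ i \<and> x0 $ i \<le> 1"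
    and "xstar \<in> omega_limit (traj W lam s x0)"
  shows "\<forall>i. Min (range (\<lambda>j. s $ j)) \<le> xstar $ i \<and> xstar $ i \<le> Max (range (\<lambda>j. s $ j))"
proof
  fix i
  define M where "M = Max (range (\<lambda>j. s $ j))"
  define m where "m = Min (range (\<lambda>j. s $ j))"
  have sM: "\<forall>j. s $ j \<le> M" unfolding M_def by (auto intro: Max_ge)
  have sm: "\<forall>j. m \<le> s $ j" unfolding m_def by (auto intro: Min_le)
  have "M \<in> range (\<lambda>j. s $ j)" unfolding M_def by (rule Max_in) auto
  then obtain jM where jM: "M = s $ jM" by auto
  have "m \<in> range (\<lambda>j. s $ j)" unfolding m_def by (rule Min_in) auto
  then obtain jm where jm: "m = s $ jm" by auto
  have M01: "0 \<le> M" "M \<le> 1" using assms(2) jM by auto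
  have m01: "0 \<le> m" "m \<le> 1" using assms(2) jm by auto
  obtain r where r: "strict_mono r" "(traj W lam s x0 \<circ> r) \<longlonglongrightarrow> xstar"
    using assms(5) unfolding omega_limit_def by auto
  have xi: "(\<lambda>k. traj W lam s x0 (r k) $ i) \<longlonglongrightarrow> xstar $ i"
    using tendsto_vec_nth[OF r(2), of i] by (simp add: o_def)
  have N: "(\<lambda>t. mat_inf_norm (Phi_from W lam 0 t)) \<longlonglongrightarrow> 0"
    using spec[OF assms(3)[unfolded asymp_stable_def Phi_def], of 0] by simp
  have Nr: "(\<lambda>k. mat_inf_norm (Phi_from W lam 0 (r k))) \<longlonglongrightarrow> 0"
    using LIMSEQ_subseq_LIMSEQ[OF N r(1)] by (simp add: o_def)
  have "xstar $ i \<le> M"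
  proof (rule tendsto_le[OF _ _ xi])
    show "((\<lambda>k. M + mat_inf_norm (Phi_from W lam 0 (r k))) \<longlongrightarrow> M) sequentially"
      using tendsto_add[OF tendsto_const Nr, of M] by simp
    show "\<forall>\<^sub>F k in sequentially. traj W lam s x0 (r k) $ i \<le> M + mat_inf_norm (Phi_from W lam 0 (r k))"
    proof (intro always_eventually allI)
      fix k
      have "\<forall>i. x0 $ i - M \<le> 1" using assms(4) M01 by (meson add_increasing2 diff_le_eq)
      from upper[OF assms(1) sM this, of "r k" i] rs_le_norm[of "Phi_from W lam 0 (r k)" i]
      show "traj W lam s x0 (r k) $ i \<le> M + mat_inf_norm (Phi_from W lam 0 (r k))" by linarith
    qed
  qed simp
  moreover have "m \<le> xstar $ i"
  proof (rule tendsto_le[OF _ xi])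
    show "((\<lambda>k. m - mat_inf_norm (Phi_from W lam 0 (r k))) \<longlongrightarrow> m) sequentially"
      using tendsto_diff[OF tendsto_const Nr, of m] by simp
    show "\<forall>\<^sub>F k in sequentially. m - mat_inf_norm (Phi_from W lam 0 (r k)) \<le> traj W lam s x0 (r k) $ i"
    proof (intro always_eventually allI)
      fix k
      have "\<forall>i. m - x0 $ i \<le> 1" using assms(4) m01 by (meson add_increasing2 diff_le_eq order.trans)
      from lower[OF assms(1) sm this, of "r k" i] rs_le_norm[of "Phi_from W lam 0 (r k)" i]
      show "m - mat_inf_norm (Phi_from W lam 0 (r k)) \<le> traj W lam s x0 (r k) $ i" by linarith
    qed
  qed simp
  ultimately show "Min (range (\<lambda>j. s $ j)) \<le> xstar $ i \<and> xstar $ i \<le> Max (range (\<lambda>j. s $ j))"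
    unfolding M_def m_def by simp
qed

end
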